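(* Let $a\neq 0$ be a real constant and $f,g$ smooth real functions, and consider the affine factorable surface of the second kind $\phi(x,z)=(x,\,f(x)\,g(z+ax),\,z)$ in $G_3^1$ with $1-(fg')^2>0$. If its mean curvature $H$ vanishes identically, then the surface $y(x,z)=f(x)g(z+ax)$ is one of the following, where $f_o,g_o,b_1,\dots,b_{13}$ are real constants: (1) $y=f_o(b_1(z+ax)+b_2)$, or $y=f_o\left(\sqrt{\frac{a^2-1}{a^2f_o^2}}\,(z+ax)+b_3\right)$; (2) $y=g_o(b_4x+b_5)$; (3) $y=b_8(b_6x+b_7)$, or $y=(b_6x+b_7)(b_9(z+ax)+b_{10})$; (4) $y=(b_{12}x+b_{13})(b_{11}(z+ax)+b_{12})$, or $y=\frac{1}{b_{11}}(b_{11}(z+ax)+b_{12})$.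
   Context: The pseudo-Galilean space $G_3^1$ is $\mathbb{R}^3$ with the scalar product $\langle X,Y\rangle=x_1y_1$ if $x_1\neq0$ or $y_1\neq0$, and $\langle X,Y\rangle=x_2y_2-x_3y_3$ if $x_1=y_1=0$. An affine factorable surface of the second kind is $\phi(x,z)=(x,f(x)g(z+ax),z)$ with $a\neq0$ constant. Here $f'$ denotes $df/dx$ and $g',g''$ denote derivatives of $g$ with respect to its argument $v=z+ax$. The mean curvature of this surface is taken to be $H=\dfrac{\Omega}{2(1-(fg')^2)^{3/2}}$, where $\Omega=(1-a^2)fg''-f''g-2af'g'+f^2f''g'^2g+2af'f^2g'^3+a^2f^3g'^2g''$. *)

theory Defs
  imports "HOL-Analysis.Analysis"
begin

definition smooth_fun :: "(real \<Rightarrow> real) \<Rightarrow> bool" where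
  "smooth_fun f \<longleftrightarrow> (\<forall>n x. ((deriv ^^ n) f) differentiable (at x))"

text \<open>The quantity Omega for the affine factorable surface of the second kind
  phi(x,z) = (x, f(x) g(z + a x), z); here v = z + a x, f' = df/dx, g' = dg/dv.\<close>
definition Omega :: "real \<Rightarrow> (real \<Rightarrow> real) \<Rightarrow> (real \<Rightarrow> real) \<Rightarrow> real \<Rightarrow> real \<Rightarrow> real" where
  "Omega a f g x z =
    (let v = z + a * x; F = f x; F1 = deriv f x; F2 = deriv (deriv f) x;
         G = g v; G1 = deriv g v; G2 = deriv (deriv g) v in
     (1 - a\<^sup>2) * F * G2 - F2 * G - 2 * a * F1 * G1 + F\<^sup>2 * F2 * G1\<^sup>2 * G
     + 2 * a * F1 * F\<^sup>2 * G1 ^ 3 + a\<^sup>2 * F ^ 3 * G1\<^sup>2 * G2)"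

definition mean_curv :: "real \<Rightarrow> (real \<Rightarrow> real) \<Rightarrow> (real \<Rightarrow> real) \<Rightarrow> real \<Rightarrow> real \<Rightarrow> real" where
  "mean_curv a f g x z =
     Omega a f g x z / (2 * (1 - (f x * deriv g (z + a * x))\<^sup>2) powr (3/2))"

end

theory Submission
  imports Defs "HOL-Computational_Algebra.Polynomial"
begin

lemma dep4:
  fixes w1 w2 w3 w4 :: "real \<times> real \<times> real"
  shows "\<exists>l1 l2 l3 l4. (l1 \<noteq> 0 \<or> l2 \<noteq> 0 \<or> l3 \<noteq> 0 \<or> l4 \<noteq> 0) \<and>
           l1 *\<^sub>R w1 + l2 *\<^sub>R w2 + l3 *\<^sub>R w3 + l4 *\<^sub>R w4 = 0"
proof (cases "distinct [w1,w2,w3,w4]")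
  case False
  then consider "w1 = w2" | "w1 = w3" | "w1 = w4" | "w2 = w3" | "w2 = w4" | "w3 = w4" by auto
  then show ?thesis
  proof cases
    case 1 then show ?thesis by (intro exI[of _ 1] exI[of _ "-1"] exI[of _ 0]) simp
  next
    case 2 then show ?thesis by (intro exI[of _ 1] exI[of _ "-1"] exI[of _ 0]) simp
  next
    case 3 then show ?thesis by (intro exI[of _ 1] exI[of _ "-1"] exI[of _ 0]) simp
  next
    case 4 then show ?thesis by (intro exI[of _ 0] exI[of _ 1] exI[of _ "-1"]) simp
  next
    case 5 then show ?thesis by (intro exI[of _ 0] exI[of _ 1] exI[of _ "-1"]) simp
  next
    case 6 then show ?thesis by (intro exI[of _ 0] exI[of _ 0] exI[of _ 1] exI[of _ "-1"]) simp
  qed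
next
  case True
  let ?S = "{w1,w2,w3,w4}"
  have "card ?S = 4" using True by simp
  then have "dependent ?S" by (intro dependent_biggerset) simp
  then obtain t u where t: "finite t" "t \<subseteq> ?S" "(\<Sum>v\<in>t. u v *\<^sub>R v) = 0" "\<exists>v\<in>t. u v \<noteq> 0"
    unfolding dependent_explicit by blast
  define l where "l = (\<lambda>v. if v \<in> t then u v else 0)"
  have "(\<Sum>v\<in>t. u v *\<^sub>R v) = (\<Sum>v\<in>?S. l v *\<^sub>R v)"
    unfolding l_def using t(1,2)
    by (intro sum.mono_neutral_cong_left) auto
  also have "\<dots> = l w1 *\<^sub>R w1 + l w2 *\<^sub>R w2 + l w3 *\<^sub>R w3 + l w4 *\<^sub>R w4"
    using True by (simp add: add.assoc)
  finally have s: "l w1 *\<^sub>R w1 + l w2 *\<^sub>R w2 + l w3 *\<^sub>R w3 + l w4 *\<^sub>R w4 = 0" using t(3) by simp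
  obtain v where v: "v \<in> t" "u v \<noteq> 0" using t(4) by blast
  have "v = w1 \<or> v = w2 \<or> v = w3 \<or> v = w4" using v(1) t(2) by blast
  then have "l w1 \<noteq> 0 \<or> l w2 \<noteq> 0 \<or> l w3 \<noteq> 0 \<or> l w4 \<noteq> 0"
    using v unfolding l_def by auto
  with s show ?thesis by blast
qed

lemma rat4:
  fixes u1 u2 u3 u4 t1 t2 t3 t4 m1 m2 m3 m4 :: real
  assumes ud: "distinct [u1,u2,u3,u4]" and unz: "u1 \<noteq> 0" "u2 \<noteq> 0" "u3 \<noteq> 0" "u4 \<noteq> 0"
    and td: "distinct [t1,t2,t3,t4]"
    and nz: "\<And>u t. u \<in> {u1,u2,u3,u4} \<Longrightarrow> t \<in> {t1,t2,t3,t4} \<Longrightarrow> 1 - u * t \<noteq> 0"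
    and eq: "\<And>t. t \<in> {t1,t2,t3,t4} \<Longrightarrow>
       m1 / (1 - u1 * t) + m2 / (1 - u2 * t) + m3 / (1 - u3 * t) + m4 / (1 - u4 * t) = 0"
  shows "m1 = 0 \<and> m2 = 0 \<and> m3 = 0 \<and> m4 = 0"
proof -
  define p where "p = smult m1 ([:1,-u2:]*[:1,-u3:]*[:1,-u4:]) + smult m2 ([:1,-u1:]*[:1,-u3:]*[:1,-u4:])
     + smult m3 ([:1,-u1:]*[:1,-u2:]*[:1,-u4:]) + smult m4 ([:1,-u1:]*[:1,-u2:]*[:1,-u3:])"
  have pe: "poly p t = m1*(1-u2*t)*(1-u3*t)*(1-u4*t) + m2*(1-u1*t)*(1-u3*t)*(1-u4*t)
     + m3*(1-u1*t)*(1-u2*t)*(1-u4*t) + m4*(1-u1*t)*(1-u2*t)*(1-u3*t)" for t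
    unfolding p_def by (simp add: algebra_simps)
  have root: "poly p t = 0" if "t \<in> {t1,t2,t3,t4}" for t
  proof -
    have n: "1 - u1*t \<noteq> 0" "1 - u2*t \<noteq> 0" "1 - u3*t \<noteq> 0" "1 - u4*t \<noteq> 0"
      using nz that by auto
    have e1: "m1 / (1 - u1 * t) * ((1-u1*t)*(1-u2*t)*(1-u3*t)*(1-u4*t)) = m1*(1-u2*t)*(1-u3*t)*(1-u4*t)"
      using n(1) by simp
    have e2: "m2 / (1 - u2 * t) * ((1-u1*t)*(1-u2*t)*(1-u3*t)*(1-u4*t)) = m2*(1-u1*t)*(1-u3*t)*(1-u4*t)"
      using n(2) by simp
    have e3: "m3 / (1 - u3 * t) * ((1-u1*t)*(1-u2*t)*(1-u3*t)*(1-u4*t)) = m3*(1-u1*t)*(1-u2*t)*(1-u4*t)"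
      using n(3) by simp
    have e4: "m4 / (1 - u4 * t) * ((1-u1*t)*(1-u2*t)*(1-u3*t)*(1-u4*t)) = m4*(1-u1*t)*(1-u2*t)*(1-u3*t)"
      using n(4) by simp
    have "poly p t = (m1 / (1 - u1 * t) + m2 / (1 - u2 * t) + m3 / (1 - u3 * t) + m4 / (1 - u4 * t))
       * ((1-u1*t)*(1-u2*t)*(1-u3*t)*(1-u4*t))"
      unfolding pe distrib_right e1 e2 e3 e4 ..
    then show ?thesis using eq[OF that] by simp
  qed
  have deg: "degree p \<le> 3"
    unfolding p_def
    by (intro degree_add_le order.trans[OF degree_smult_le] order.trans[OF degree_mult_le]
        add_le_mono; simp)+
  have p0: "p = 0"
  proof (rule ccontr)
    assume "p \<noteq> 0"
    then have "card {x. poly p x = 0} \<le> 3" using card_poly_roots_bound deg by fastforce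
    moreover have "{t1,t2,t3,t4} \<subseteq> {x. poly p x = 0}" using root by auto
    moreover have "finite {x. poly p x = 0}" using \<open>p \<noteq> 0\<close> poly_roots_finite by blast
    ultimately have "card {t1,t2,t3,t4} \<le> 3" by (meson card_mono order.trans)
    with td show False by simp
  qed
  have "poly p (1/u1) = 0" "poly p (1/u2) = 0" "poly p (1/u3) = 0" "poly p (1/u4) = 0"
    using p0 by auto
  moreover have "1 - u2/u1 \<noteq> 0" "1 - u3/u1 \<noteq> 0" "1 - u4/u1 \<noteq> 0"
     "1 - u1/u2 \<noteq> 0" "1 - u3/u2 \<noteq> 0" "1 - u4/u2 \<noteq> 0"
     "1 - u1/u3 \<noteq> 0" "1 - u2/u3 \<noteq> 0" "1 - u4/u3 \<noteq> 0"
     "1 - u1/u4 \<noteq> 0" "1 - u2/u4 \<noteq> 0" "1 - u3/u4 \<noteq> 0"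
    using ud unz by (auto simp: field_simps)
  ultimately show ?thesis using unz unfolding pe by auto
qed

lemma ivt_gen:
  fixes h :: "real \<Rightarrow> real"
  assumes c: "continuous_on {p..q} h" and pq: "p \<le> q"
    and y: "min (h p) (h q) \<le> y" "y \<le> max (h p) (h q)"
  shows "\<exists>x. p \<le> x \<and> x \<le> q \<and> h x = y"
proof (cases "h p \<le> h q")
  case True
  then show ?thesis using IVT'[of h p y q] c pq y by auto
next
  case False
  then show ?thesis using IVT2'[of h q y p] c pq y by auto
qed

lemma sq_ne:
  fixes y z :: real
  assumes "y \<noteq> z" "0 < y * z"
  shows "y\<^sup>2 \<noteq> z\<^sup>2"
proof
  assume "y\<^sup>2 = z\<^sup>2"
  then have "(y - z) * (y + z) = 0" by (simp add: algebra_simps power2_eq_square)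
  moreover have "y + z \<noteq> 0" using assms(2)
    by (metis add.inverse_unique minus_mult_left neg_less_0_iff_less mult_minus_left not_square_less_zero)
  ultimately show False using assms(1) by simp
qed

lemma four_vals:
  fixes h :: "real \<Rightarrow> real"
  assumes c: "continuous_on {p..q} h" and pq: "p \<le> q" and ne: "h p \<noteq> h q"
  shows "\<exists>x1 x2 x3 x4. x1 \<in> {p..q} \<and> x2 \<in> {p..q} \<and> x3 \<in> {p..q} \<and> x4 \<in> {p..q} \<and>
     h x1 \<noteq> 0 \<and> h x2 \<noteq> 0 \<and> h x3 \<noteq> 0 \<and> h x4 \<noteq> 0 \<and>
     distinct [(h x1)\<^sup>2, (h x2)\<^sup>2, (h x3)\<^sup>2, (h x4)\<^sup>2]"
proof -
  define lo where "lo = min (h p) (h q)"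
  define hi where "hi = max (h p) (h q)"
  have lh: "lo < hi" using ne unfolding lo_def hi_def by auto
  obtain L H where LH: "lo \<le> L" "L < H" "H \<le> hi" "0 \<le> L \<or> H \<le> 0"
  proof (cases "0 \<le> lo")
    case True then show ?thesis using that[of lo hi] lh by auto
  next
    case False
    show ?thesis
    proof (cases "hi \<le> 0")
      case True then show ?thesis using that[of lo hi] lh by auto
    next
      case False
      then show ?thesis using that[of 0 hi] \<open>\<not> 0 \<le> lo\<close> by auto
    qed
  qed
  define y where "y = (\<lambda>k::nat. L + real k * (H - L) / 5)"
  have yin: "lo \<le> y k \<and> y k \<le> hi" if "k \<le> 5" for k
  proof -
    have "real k * (H - L) \<le> 5 * (H - L)" using that LH by (intro mult_right_mono) auto
    then have "real k * (H - L) / 5 \<le> (H - L)" by simp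
    moreover have "0 \<le> real k * (H - L) / 5" using LH by simp
    ultimately show ?thesis unfolding y_def using LH by linarith
  qed
  have ex: "\<exists>x. x \<in> {p..q} \<and> h x = y k" if "k \<le> 5" for k
    using ivt_gen[OF c pq, of "y k"] yin[OF that] unfolding lo_def hi_def by auto
  obtain x1 x2 x3 x4 where xs: "x1 \<in> {p..q}" "h x1 = y 1" "x2 \<in> {p..q}" "h x2 = y 2"
     "x3 \<in> {p..q}" "h x3 = y 3" "x4 \<in> {p..q}" "h x4 = y 4"
    using ex[of 1] ex[of 2] ex[of 3] ex[of 4] by auto
  have sgn: "0 < y j * y k" if "1 \<le> j" "1 \<le> k" "j \<le> 4" "k \<le> 4" for j k
  proof -
    have a: "0 < real j * (H - L) / 5" "0 < real k * (H - L) / 5" using that LH by auto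
    have b: "real j * (H - L) < 5 * (H - L)" "real k * (H - L) < 5 * (H - L)"
      using that LH by (intro mult_strict_right_mono; simp)+
    show ?thesis
    proof (cases "0 \<le> L")
      case True
      then have "0 < y j" "0 < y k" unfolding y_def using a by auto
      then show ?thesis by simp
    next
      case False
      then have "H \<le> 0" using LH by auto
      have "y j < 0" "y k < 0" unfolding y_def using b \<open>H \<le> 0\<close> by (simp_all add: field_simps)
      then show ?thesis by (simp add: mult_neg_neg)
    qed
  qed
  have dj: "y j \<noteq> y k" if "j \<noteq> k" for j k
  proof
    assume "y j = y k"
    then have "real j * (H - L) = real k * (H - L)" unfolding y_def by simp
    then have "real j = real k" using LH by simp
    then show False using that by simp
  qed
  have nz: "y k \<noteq> 0" if "1 \<le> k" "k \<le> 4" for k using sgn[OF that(1) that(1) that(2) that(2)] by auto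
  have sq: "(y j)\<^sup>2 \<noteq> (y k)\<^sup>2" if "j \<noteq> k" "1 \<le> j" "1 \<le> k" "j \<le> 4" "k \<le> 4" for j k
    by (rule sq_ne[OF dj[OF that(1)] sgn[OF that(2-5)]])
  show ?thesis
    apply (rule exI[of _ x1], rule exI[of _ x2], rule exI[of _ x3], rule exI[of _ x4])
    using xs nz[of 1] nz[of 2] nz[of 3] nz[of 4]
      sq[of 1 2] sq[of 1 3] sq[of 1 4] sq[of 2 3] sq[of 2 4] sq[of 3 4]
    by auto
qed

theorem mainTheorem2:
  fixes a :: real and f g :: "real \<Rightarrow> real"
  assumes a_nz: "a \<noteq> 0"
    and f_smooth: "smooth_fun f" and g_smooth: "smooth_fun g"
    and reg: "\<forall>x z. 1 - (f x * deriv g (z + a * x))\<^sup>2 > 0"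
    and minimal: "\<forall>x z. mean_curv a f g x z = 0"
  shows
    "(\<exists>fo b1 b2. \<forall>x z. f x * g (z + a * x) = fo * (b1 * (z + a * x) + b2))
   \<or> (\<exists>fo b3. \<forall>x z. f x * g (z + a * x)
          = fo * (sqrt ((a\<^sup>2 - 1) / (a\<^sup>2 * fo\<^sup>2)) * (z + a * x) + b3))
   \<or> (\<exists>go b4 b5. \<forall>x z. f x * g (z + a * x) = go * (b4 * x + b5))
   \<or> (\<exists>b6 b7 b8. \<forall>x z. f x * g (z + a * x) = b8 * (b6 * x + b7))
   \<or> (\<exists>b6 b7 b9 b10. \<forall>x z. f x * g (z + a * x)
          = (b6 * x + b7) * (b9 * (z + a * x) + b10))
   \<or> (\<exists>b11 b12 b13. \<forall>x z. f x * g (z + a * x)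
          = (b12 * x + b13) * (b11 * (z + a * x) + b12))
   \<or> (\<exists>b11 b12. \<forall>x z. f x * g (z + a * x) = (1 / b11) * (b11 * (z + a * x) + b12))"
  proof -
  define F1 where "F1 = deriv f"
  define F2 where "F2 = deriv (deriv f)"
  define G1 where "G1 = deriv g"
  define G2 where "G2 = deriv (deriv g)"
  have smf: "\<And>n x. (deriv ^^ n) f differentiable (at x)"
    using f_smooth unfolding smooth_fun_def by auto
  have smg: "\<And>n x. (deriv ^^ n) g differentiable (at x)"
    using g_smooth unfolding smooth_fun_def by auto
  have fd: "DERIV f x :> F1 x" for x
    using smf[of 0 x] unfolding F1_def by (simp add: DERIV_deriv_iff_real_differentiable)
  have f1d: "DERIV F1 x :> F2 x" for x
    using smf[of 1 x] unfolding F1_def F2_def by (simp add: DERIV_deriv_iff_real_differentiable)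
  have gd: "DERIV g x :> G1 x" for x
    using smg[of 0 x] unfolding G1_def by (simp add: DERIV_deriv_iff_real_differentiable)
  have g1d: "DERIV G1 x :> G2 x" for x
    using smg[of 1 x] unfolding G1_def G2_def by (simp add: DERIV_deriv_iff_real_differentiable)
  have g2c: "isCont G2 x" for x
    using smg[of 2 x] unfolding G2_def
    by (simp add: numeral_2_eq_2 differentiable_imp_continuous_within)
  have fc: "isCont f x" for x using fd DERIV_isCont by blast
  have g1c: "isCont G1 x" for x using g1d DERIV_isCont by blast
  have R: "(f x)\<^sup>2 * (G1 v)\<^sup>2 < 1" for x v
  proof -
    have zv: "v - a * x + a * x = v" by simp
    show ?thesis using reg[rule_format, of x "v - a*x"] unfolding zv G1_def
      by (simp add: power_mult_distrib)
  qed
  have E: "(1 - a\<^sup>2) * f x * G2 v - F2 x * g v - 2 * a * F1 x * G1 v + (f x)\<^sup>2 * F2 x * (G1 v)\<^sup>2 * g v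
     + 2 * a * F1 x * (f x)\<^sup>2 * G1 v ^ 3 + a\<^sup>2 * f x ^ 3 * (G1 v)\<^sup>2 * G2 v = 0" for x v
  proof -
    have zv: "v - a * x + a * x = v" by simp
    have m: "mean_curv a f g x (v - a*x) = 0" using minimal by blast
    have r: "1 - (f x * deriv g v)\<^sup>2 > 0" using reg[rule_format, of x "v - a*x"] zv by simp
    then have "(1 - (f x * deriv g v)\<^sup>2) powr (3/2) > 0" by simp
    then have "Omega a f g x (v - a*x) = 0" using m unfolding mean_curv_def zv by simp
    then show ?thesis unfolding Omega_def Let_def zv F1_def F2_def G1_def G2_def by simp
  qed
  have S: "g v * F2 x + 2 * a * G1 v * F1 x + a\<^sup>2*f x*G2 v = G2 v * f x / (1 - (f x)\<^sup>2*(G1 v)\<^sup>2)" for x v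
  proof -
    have D: "1 - (f x)\<^sup>2*(G1 v)\<^sup>2 \<noteq> 0" using R[of x v] by simp
    have "(1 - (f x)\<^sup>2*(G1 v)\<^sup>2) * (g v * F2 x + 2 * a * G1 v * F1 x + a\<^sup>2*f x*G2 v) - G2 v * f x
       = - ((1 - a\<^sup>2) * f x * G2 v - F2 x * g v - 2 * a * F1 x * G1 v + (f x)\<^sup>2 * F2 x * (G1 v)\<^sup>2 * g v
     + 2 * a * F1 x * (f x)\<^sup>2 * G1 v ^ 3 + a\<^sup>2 * f x ^ 3 * (G1 v)\<^sup>2 * G2 v)"
      by (simp add: algebra_simps power2_eq_square power3_eq_cube)
    then have "(1 - (f x)\<^sup>2*(G1 v)\<^sup>2) * (g v * F2 x + 2 * a * G1 v * F1 x + a\<^sup>2*f x*G2 v) = G2 v * f x"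
      using E[of x v] by simp
    then show ?thesis using D by (simp add: eq_divide_eq mult.commute)
  qed
  show ?thesis
  proof (cases "\<forall>v. G1 v = 0")
    case True
    have "\<forall>x. DERIV g x :> 0" using gd True by simp
    then have gc: "g v = g 0" for v by (rule DERIV_isconst_all)
    have G10: "G1 = (\<lambda>_. 0)" using True by auto
    have G20: "G2 v = 0" for v using g1d[of v] unfolding G10
      by (metis DERIV_const DERIV_unique)
    have F2g: "F2 x * g 0 = 0" for x using E[of x 0] True G20 gc by simp
    show ?thesis
    proof (cases "g 0 = 0")
      case True
      then have "\<forall>x z. f x * g (z + a * x) = 0 * (0 * (z + a * x) + 0)"
        using gc by (metis mult_zero_left mult_zero_right)
      then show ?thesis by blast
    next
      case False
      then have "F2 x = 0" for x using F2g by simp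
      then have "\<forall>x. DERIV F1 x :> 0" using f1d by simp
      then have F1c: "F1 x = F1 0" for x by (rule DERIV_isconst_all)
      have "DERIV (\<lambda>x. f x - F1 0 * x) x :> 0" for x
        using fd[of x] F1c[of x] by (auto intro!: derivative_eq_intros)
      then have "f x - F1 0 * x = f 0 - F1 0 * 0" for x
        using DERIV_isconst_all[of "\<lambda>x. f x - F1 0 * x"] by blast
      then have "\<forall>x z. f x * g (z + a * x) = g 0 * (F1 0 * x + f 0)"
        using gc by (metis add.commute diff_eq_eq mult.commute mult_zero_right diff_zero)
      then show ?thesis by blast
    qed
  next
    case False
    then obtain v0 where v0: "G1 v0 \<noteq> 0" by auto
    show ?thesis
    proof (cases "\<forall>x. f x = 0")
      case True
      then have "\<forall>x z. f x * g (z + a * x) = 0 * (0 * (z + a * x) + 0)" by simp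
      then show ?thesis by blast
    next
      case False
      then obtain x0 where x0: "f x0 \<noteq> 0" by auto
      show ?thesis
      proof (cases "\<forall>v. G2 v = 0")
        case True
        have "\<forall>x. DERIV G1 x :> 0" using g1d True by simp
        then have G1c: "G1 v = G1 v0" for v by (rule DERIV_isconst_all)
        define s0 where "s0 = G1 v0"
        have "DERIV (\<lambda>v. g v - s0 * v) v :> 0" for v
          using gd[of v] G1c[of v] unfolding s0_def by (auto intro!: derivative_eq_intros)
        then have "g v - s0 * v = g 0 - s0 * 0" for v
          using DERIV_isconst_all[of "\<lambda>v. g v - s0 * v"] by blast
        then have glin: "g v = s0 * v + g 0" for v by (metis diff_eq_eq add.commute mult_zero_right diff_zero)
        have F0: "F2 x = 0 \<and> F1 x = 0" for x
        proof -
          have e0: "g 0 * F2 x + 2 * a * s0 * F1 x = 0" using S[of 0 x] True G1c[of 0] unfolding s0_def by simp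
          have e1: "g 1 * F2 x + 2 * a * s0 * F1 x = 0" using S[of 1 x] True G1c[of 1] unfolding s0_def by simp
          have "s0 * F2 x = 0" using e0 e1 glin[of 1] by (simp add: algebra_simps)
          then have "F2 x = 0" using v0 unfolding s0_def by simp
          then show ?thesis using e0 v0 a_nz unfolding s0_def by simp
        qed
        have "\<forall>x. DERIV f x :> 0" using fd F0 by simp
        then have fconst: "f x = f 0" for x by (rule DERIV_isconst_all)
        have "\<forall>x z. f x * g (z + a * x) = f 0 * (s0 * (z + a * x) + g 0)"
        proof (intro allI)
          fix x z
          show "f x * g (z + a * x) = f 0 * (s0 * (z + a * x) + g 0)"
            using fconst[of x] glin[of "z + a * x"] by simp
        qed
        then show ?thesis by blast
      next
        case False
        then obtain v1 where v1: "G2 v1 \<noteq> 0" by auto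
        obtain r where r: "r > 0" "\<forall>y. dist v1 y < r \<longrightarrow> G2 y \<noteq> 0"
          using continuous_at_avoid[OF g2c v1] by blast
        have rb: "G2 y \<noteq> 0" if "\<bar>y - v1\<bar> < r" for y
          using r(2) that by (simp add: dist_real_def abs_minus_commute)
        have False
        proof (cases "\<forall>x. f x = f x0")
          case True
          define c where "c = f x0"
          have fcst: "f = (\<lambda>_. c)" using True unfolding c_def by auto
          have F10: "F1 x = 0" for x using fd[of x] unfolding fcst by (metis DERIV_const DERIV_unique)
          have F1z: "F1 = (\<lambda>_. 0)" using F10 by auto
          have F20: "F2 x = 0" for x using f1d[of x] unfolding F1z by (metis DERIV_const DERIV_unique)
          have cnz: "c \<noteq> 0" using x0 unfolding c_def .
          have K: "a\<^sup>2 * c\<^sup>2 * (G1 v)\<^sup>2 = a\<^sup>2 - 1" if "\<bar>v - v1\<bar> < r" for v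
          proof -
            have "c * G2 v * (1 - a\<^sup>2 + a\<^sup>2 * c\<^sup>2 * (G1 v)\<^sup>2) = 0"
              using E[of x0 v] F10[of x0] F20[of x0] unfolding c_def[symmetric]
              by (simp add: algebra_simps power2_eq_square power3_eq_cube)
            then have "1 - a\<^sup>2 + a\<^sup>2 * c\<^sup>2 * (G1 v)\<^sup>2 = 0" using cnz rb[OF that] by simp
            then show ?thesis by simp
          qed
          have G1z: "G1 v = 0" if v: "\<bar>v - v1\<bar> < r" for v
          proof -
            define d where "d = r - \<bar>v - v1\<bar>"
            have d: "d > 0" using v unfolding d_def by simp
            have der: "DERIV (\<lambda>w. a\<^sup>2 * c\<^sup>2 * (G1 w)\<^sup>2) v :> a\<^sup>2 * c\<^sup>2 * (2 * G1 v * G2 v)"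
              using g1d[of v] by (auto intro!: derivative_eq_intros)
            have "\<forall>y. \<bar>v - y\<bar> < d \<longrightarrow> a\<^sup>2 * c\<^sup>2 * (G1 v)\<^sup>2 = a\<^sup>2 * c\<^sup>2 * (G1 y)\<^sup>2"
            proof (intro allI impI)
              fix y assume "\<bar>v - y\<bar> < d"
              then have "\<bar>y - v1\<bar> < r" unfolding d_def by linarith
              then show "a\<^sup>2 * c\<^sup>2 * (G1 v)\<^sup>2 = a\<^sup>2 * c\<^sup>2 * (G1 y)\<^sup>2" using K[OF v] K by simp
            qed
            from DERIV_local_const[OF der d this] have "a\<^sup>2 * c\<^sup>2 * (2 * G1 v * G2 v) = 0" .
            then show ?thesis using a_nz cnz rb[OF v] by simp
          qed
          have "\<forall>y. \<bar>v1 - y\<bar> < r \<longrightarrow> G1 v1 = G1 y"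
            using G1z r(1) by (simp add: abs_minus_commute)
          from DERIV_local_const[OF g1d[of v1] r(1) this] show False using v1 by simp
        next
          case False
          then obtain x1 where x1: "f x1 \<noteq> f x0" by auto
          define p where "p = min x0 x1"
          define q where "q = max x0 x1"
          have pq: "p \<le> q" "f p \<noteq> f q" using x1 unfolding p_def q_def by (auto simp: min_def max_def)
          have cf: "continuous_on {p..q} f" using fc by (simp add: continuous_at_imp_continuous_on)
          obtain xa xb xc xd where X: "f xa \<noteq> 0" "f xb \<noteq> 0" "f xc \<noteq> 0" "f xd \<noteq> 0"
            "distinct [(f xa)\<^sup>2, (f xb)\<^sup>2, (f xc)\<^sup>2, (f xd)\<^sup>2]"
            using four_vals[OF cf pq] by blast
          define pv where "pv = v1 - r/2"
          define qv where "qv = v1 + r/2"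
          have pqv: "pv < qv" using r(1) unfolding pv_def qv_def by simp
          have inb: "\<bar>y - v1\<bar> < r" if "y \<in> {pv..qv}" for y
            using that r(1) unfolding pv_def qv_def by auto
          obtain z where z: "pv < z" "z < qv" "G1 qv - G1 pv = (qv - pv) * G2 z"
            using MVT2[OF pqv, of G1 G2] g1d by blast
          have "G2 z \<noteq> 0" using inb[of z] z rb by auto
          then have neq: "G1 pv \<noteq> G1 qv" using z(3) pqv by auto
          have cg: "continuous_on {pv..qv} G1" using g1c by (simp add: continuous_at_imp_continuous_on)
          obtain wa wb wc wd where W: "wa \<in> {pv..qv}" "wb \<in> {pv..qv}" "wc \<in> {pv..qv}" "wd \<in> {pv..qv}"
            "distinct [(G1 wa)\<^sup>2, (G1 wb)\<^sup>2, (G1 wc)\<^sup>2, (G1 wd)\<^sup>2]"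
            using four_vals[OF cg less_imp_le[OF pqv] neq] by blast
          obtain l1 l2 l3 l4 where L: "l1 \<noteq> 0 \<or> l2 \<noteq> 0 \<or> l3 \<noteq> 0 \<or> l4 \<noteq> 0"
            "l1 *\<^sub>R (F2 xa, F1 xa, f xa) + l2 *\<^sub>R (F2 xb, F1 xb, f xb) + l3 *\<^sub>R (F2 xc, F1 xc, f xc)
              + l4 *\<^sub>R (F2 xd, F1 xd, f xd) = 0"
            using dep4[of "(F2 xa, F1 xa, f xa)" "(F2 xb, F1 xb, f xb)" "(F2 xc, F1 xc, f xc)" "(F2 xd, F1 xd, f xd)"]
            by blast
          have L2: "l1 * F2 xa + l2 * F2 xb + l3 * F2 xc + l4 * F2 xd = 0"
            "l1 * F1 xa + l2 * F1 xb + l3 * F1 xc + l4 * F1 xd = 0"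
            "l1 * f xa + l2 * f xb + l3 * f xc + l4 * f xd = 0"
            using arg_cong[OF L(2), of fst] arg_cong[OF L(2), of "\<lambda>p. fst (snd p)"]
              arg_cong[OF L(2), of "\<lambda>p. snd (snd p)"] by simp_all
          have key: "(l1 * f xa) / (1 - (f xa)\<^sup>2 * t) + (l2 * f xb) / (1 - (f xb)\<^sup>2 * t)
             + (l3 * f xc) / (1 - (f xc)\<^sup>2 * t) + (l4 * f xd) / (1 - (f xd)\<^sup>2 * t) = 0"
            if tin: "t \<in> {(G1 wa)\<^sup>2, (G1 wb)\<^sup>2, (G1 wc)\<^sup>2, (G1 wd)\<^sup>2}" for t
          proof -
            obtain w where w: "w \<in> {pv..qv}" "t = (G1 w)\<^sup>2" using tin W by auto
            have g2w: "G2 w \<noteq> 0" using rb inb w(1) by blast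
            have one: "(l * f x) / (1 - (f x)\<^sup>2 * t) * G2 w
                = l * (g w * F2 x + 2 * a * G1 w * F1 x + a\<^sup>2 * f x * G2 w)" for l x
              unfolding S[of w x] w(2) by (simp add: mult_ac)
            have "((l1 * f xa) / (1 - (f xa)\<^sup>2 * t) + (l2 * f xb) / (1 - (f xb)\<^sup>2 * t)
             + (l3 * f xc) / (1 - (f xc)\<^sup>2 * t) + (l4 * f xd) / (1 - (f xd)\<^sup>2 * t)) * G2 w
              = l1 * (g w * F2 xa + 2 * a * G1 w * F1 xa + a\<^sup>2 * f xa * G2 w)
              + l2 * (g w * F2 xb + 2 * a * G1 w * F1 xb + a\<^sup>2 * f xb * G2 w)
              + l3 * (g w * F2 xc + 2 * a * G1 w * F1 xc + a\<^sup>2 * f xc * G2 w)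
              + l4 * (g w * F2 xd + 2 * a * G1 w * F1 xd + a\<^sup>2 * f xd * G2 w)"
              by (simp only: distrib_right one)
            also have "\<dots> = g w * (l1 * F2 xa + l2 * F2 xb + l3 * F2 xc + l4 * F2 xd)
               + 2 * a * G1 w * (l1 * F1 xa + l2 * F1 xb + l3 * F1 xc + l4 * F1 xd)
               + a\<^sup>2 * G2 w * (l1 * f xa + l2 * f xb + l3 * f xc + l4 * f xd)"
              by (simp add: algebra_simps)
            also have "\<dots> = 0" using L2 by simp
            finally have "((l1 * f xa) / (1 - (f xa)\<^sup>2 * t) + (l2 * f xb) / (1 - (f xb)\<^sup>2 * t)
             + (l3 * f xc) / (1 - (f xc)\<^sup>2 * t) + (l4 * f xd) / (1 - (f xd)\<^sup>2 * t)) * G2 w = 0" .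
            then show ?thesis using g2w by simp
          qed
          have nz1: "1 - u * t \<noteq> 0" if uin: "u \<in> {(f xa)\<^sup>2, (f xb)\<^sup>2, (f xc)\<^sup>2, (f xd)\<^sup>2}"
              and tin: "t \<in> {(G1 wa)\<^sup>2, (G1 wb)\<^sup>2, (G1 wc)\<^sup>2, (G1 wd)\<^sup>2}" for u t
          proof -
            obtain x w where "u = (f x)\<^sup>2" "t = (G1 w)\<^sup>2" using uin tin by blast
            then show ?thesis using R[of x w] by simp
          qed
          have "l1 * f xa = 0 \<and> l2 * f xb = 0 \<and> l3 * f xc = 0 \<and> l4 * f xd = 0"
            by (rule rat4[OF X(5) _ _ _ _ W(5) nz1 key]) (use X in simp_all)
          then show False using X L(1) by simp
        qed
        then show ?thesis by blast
      qed
    qed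
  qed
qed


end
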